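(* Fix $d\ge1$, $\alpha>0$, $M,\tilde M>0$ with $M/\tilde M\ge(1-5^{-\alpha})^{-1}\bigl(1+\frac{1}{5^\alpha-3^\alpha}\bigr)80^\alpha$, and $\sigma^2\ge0$. For each budget $n$ let $\mathcal{C}_{\alpha,2}$ be the class of CSO problems constructed below. For any admissible algorithm there exists a constant $b_3$ such that for all $n\ge b_3$, $$\sup_{\mathcal{CSO}\in\mathcal{C}_{\alpha,2}}\mathbb{E}_{\mathcal{CSO}}\bigl[y(\mathbf{x}^* )-y(\hat{\mathbf{x}}_n^* )\bigr]\ge b_4\exp(-b_5 n),$$ where $b_4,b_5$ are positive constants independent of $n$ and $\sigma^2$.
   Context: $\|\mathbf{x}\|_\infty=\max_l|x_l|$. Let $\Delta=\lfloor 3^d/2\rfloor$, $\bar a=\lceil 4(n+1)/\Delta\rceil+2$, $\gamma_a=5^{-a}/2$, $\hat M=\frac{40^\alpha}{5^\alpha-3^\alpha}\tilde M$. For $a=0,\dots,\bar a$ and $\boldsymbol\kappa_a\in\{1,\dots,5^a\}^d$ let $\mathbf{c}_{\boldsymbol\kappa_a,a}=((2\kappa_{1,a}-1)\gamma_a,\dots,(2\kappa_{d,a}-1)\gamma_a)$ and $\mathcal Z_{\boldsymbol\kappa_a,a}=\{\mathbf{x}\in[0,1]^d:\|\mathbf{x}-\mathbf{c}_{\boldsymbol\kappa_a,a}\|_\infty<\gamma_a\}$. For $a\ge1$, $\mathcal P(\boldsymbol\kappa_a)$ is the level-$(a-1)$ index with $\mathcal Z_{\boldsymbol\kappa_a,a}\subset\mathcal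 Z_{\mathcal P(\boldsymbol\kappa_a),a-1}$, and $\mathcal P^\ell$ its $\ell$-fold iterate. Let $\mathcal U_0=\{\mathcal Z_{\mathbf 1,0}\}$ and for $a\ge1$, $\mathcal U_a=\{\mathcal Z_{\boldsymbol\kappa_a,a}:\mathcal Z_{\mathcal P(\boldsymbol\kappa_a),a-1}\in\mathcal U_{a-1},\ \|\mathbf{c}_{\boldsymbol\kappa_a,a}-\mathbf{c}_{\mathcal P(\boldsymbol\kappa_a),a-1}\|_\infty\le2\gamma_a\}$. Component functions on $[0,1]^d$: $y_{\mathcal S}(\mathbf{x}\mid\mathbf 1,0)=\hat M(5^\alpha-3^\alpha)\gamma_1^\alpha$ if $\|\mathbf{x}-\mathbf{c}_{\mathbf 1,0}\|_\infty\le3\gamma_1$ and $=\hat M5^\alpha\gamma_1^\alpha-\hat M\|\mathbf{x}-\mathbf{c}_{\mathbf 1,0}\|_\infty^\alpha$ if $3\gamma_1\le\|\mathbf{x}-\mathbf{c}_{\mathbf 1,0}\|_\infty\le5\gamma_1$; for $1\le a\le\bar a-1$ and $\mathcal Z_{\boldsymbol\kappa_a,a}\in\mathcal U_a$, $y_{\mathcal S}(\mathbf{x}\mid\boldsymbol\kappa_a,a)=\hat M(5^\alpha-3^\alpha)\gamma_{a+1}^\alpha$ if $\|\mathbf{x}-\mathbf{c}_{\boldsymbol\kappa_a,a}\|_\infty\le3\gamma_{a+1}$, $=\hat M5^\alpha\gamma_{a+1}^\alpha-\hat M\|\mathbf{x}-\mathbf{c}_{\boldsymbol\kappa_a,a}\|_\infty^\alpha$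 if $3\gamma_{a+1}<\|\cdot\|_\infty\le5\gamma_{a+1}$, $=0$ otherwise; for $\mathcal Z_{\boldsymbol\kappa_{\bar a},\bar a}\in\mathcal U_{\bar a}$, $y_{\mathcal D}(\mathbf{x}\mid\boldsymbol\kappa_{\bar a},\bar a)=\hat M\gamma_{\bar a}^\alpha-\hat M\|\mathbf{x}-\mathbf{c}_{\boldsymbol\kappa_{\bar a},\bar a}\|_\infty^\alpha$ if $\|\mathbf{x}-\mathbf{c}_{\boldsymbol\kappa_{\bar a},\bar a}\|_\infty\le\gamma_{\bar a}$, $=0$ otherwise. Set $y_{\mathcal C}(\mathbf{x}\mid\boldsymbol\kappa_{\bar a},\bar a)=y_{\mathcal D}(\mathbf{x}\mid\boldsymbol\kappa_{\bar a},\bar a)+\sum_{\ell=1}^{\bar a-1}y_{\mathcal S}(\mathbf{x}\mid\mathcal P^\ell(\boldsymbol\kappa_{\bar a}),\bar a-\ell)+y_{\mathcal S}(\mathbf{x}\mid\mathbf 1,0)$. $\mathcal C_{\alpha,2}$ is the set of problems, one for each $\mathcal Z_{\boldsymbol\kappa_{\bar a},\bar a}\in\mathcal U_{\bar a}$, of maximizing $y=y_{\mathcal C}(\cdot\mid\boldsymbol\kappa_{\bar a},\bar a)$ over $[0,1]^d$ where each query at $\mathbf{x}$ returns $y(\mathbf{x})+\varepsilon$, $\varepsilon\sim N(0,\sigma^2)$ independent of everything else; $\mathbf{x}^*$ is the maximizer of $y$. Admissible algorithm with budget $n$: (i) $\mathbf{x}_1$ deterministic or a measurable function of a random vector $U_1$;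 (ii) $\mathbf{x}_{t+1}$ a measurable function of $\mathbf{x}_1,Y(\mathbf{x}_1),\dots,\mathbf{x}_t,Y(\mathbf{x}_t)$ and a random vector $U_{t+1}$; (iii) output $\hat{\mathbf{x}}_n^*$ a measurable function of the full history and a random vector $U_n^*$; (iv) $\hat{\mathbf{x}}_n^*\in\{\mathbf{x}_1,\dots,\mathbf{x}_n\}$; the $U$'s are independent and independent of the noise. "Algorithm" means such a rule for each $n$. *)

theory Defs
  imports "HOL-Probability.Probability"
begin

text \<open>Points of [0,1]^d are vectors of type real^'d with d = CARD('d).
  The sup-norm is the library's infnorm (= max of absolute coordinates).\<close>

definition unit_cube :: "(real^'d) set" where
  "unit_cube = {x. \<forall>i. 0 \<le> x $ i \<and> x $ i \<le> 1}"

definition Delta :: "nat \<Rightarrow> nat" where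
  "Delta d = 3 ^ d div 2"

definition abar :: "nat \<Rightarrow> nat \<Rightarrow> nat" where
  "abar d n = nat \<lceil>4 * (real n + 1) / real (Delta d)\<rceil> + 2"

definition gamma :: "nat \<Rightarrow> real" where
  "gamma a = 1 / (2 * 5 ^ a)"

definition Mhat :: "real \<Rightarrow> real \<Rightarrow> real" where
  "Mhat \<alpha> Mt = 40 powr \<alpha> / (5 powr \<alpha> - 3 powr \<alpha>) * Mt"

definition idx :: "nat \<Rightarrow> ('d::finite \<Rightarrow> nat) set" where
  "idx a = {\<kappa>. \<forall>i. 1 \<le> \<kappa> i \<and> \<kappa> i \<le> 5 ^ a}"

definition center :: "('d::finite \<Rightarrow> nat) \<Rightarrow> nat \<Rightarrow> real^'d" where
  "center \<kappa> a = (\<chi> i. (2 * real (\<kappa> i) - 1) * gamma a)"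

definition cell :: "('d::finite \<Rightarrow> nat) \<Rightarrow> nat \<Rightarrow> (real^'d) set" where
  "cell \<kappa> a = {x \<in> unit_cube. infnorm (x - center \<kappa> a) < gamma a}"

definition parent :: "('d::finite \<Rightarrow> nat) \<Rightarrow> nat \<Rightarrow> ('d \<Rightarrow> nat)" where
  "parent \<kappa> a = (THE \<kappa>'. \<kappa>' \<in> idx (a - 1) \<and> cell \<kappa> a \<subseteq> cell \<kappa>' (a - 1))"

fun piter :: "nat \<Rightarrow> ('d::finite \<Rightarrow> nat) \<Rightarrow> nat \<Rightarrow> ('d \<Rightarrow> nat)" where
  "piter 0 \<kappa> a = \<kappa>"
| "piter (Suc l) \<kappa> a = parent (piter l \<kappa> a) (a - l)"

fun Uidx :: "nat \<Rightarrow> ('d::finite \<Rightarrow> nat) set" where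
  "Uidx 0 = {\<lambda>_. 1}"
| "Uidx (Suc a) = {\<kappa> \<in> idx (Suc a). parent \<kappa> (Suc a) \<in> Uidx a \<and>
      infnorm (center \<kappa> (Suc a) - center (parent \<kappa> (Suc a)) a) \<le> 2 * gamma (Suc a)}"

definition yS :: "real \<Rightarrow> real \<Rightarrow> ('d::finite \<Rightarrow> nat) \<Rightarrow> nat \<Rightarrow> real^'d \<Rightarrow> real" where
  "yS Mh \<alpha> \<kappa> a x =
    (let r = infnorm (x - center \<kappa> a) in
      if r \<le> 3 * gamma (a + 1) then Mh * (5 powr \<alpha> - 3 powr \<alpha>) * gamma (a + 1) powr \<alpha>
      else if r \<le> 5 * gamma (a + 1) then Mh * 5 powr \<alpha> * gamma (a + 1) powr \<alpha> - Mh * r powr \<alpha>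
      else 0)"

definition yD :: "real \<Rightarrow> real \<Rightarrow> ('d::finite \<Rightarrow> nat) \<Rightarrow> nat \<Rightarrow> real^'d \<Rightarrow> real" where
  "yD Mh \<alpha> \<kappa> a x =
    (let r = infnorm (x - center \<kappa> a) in
      if r \<le> gamma a then Mh * gamma a powr \<alpha> - Mh * r powr \<alpha> else 0)"

definition yC :: "real \<Rightarrow> real \<Rightarrow> nat \<Rightarrow> ('d::finite \<Rightarrow> nat) \<Rightarrow> real^'d \<Rightarrow> real" where
  "yC Mh \<alpha> ab \<kappa> x =
     yD Mh \<alpha> \<kappa> ab x + (\<Sum>l\<in>{1..ab - 1}. yS Mh \<alpha> (piter l \<kappa> ab) (ab - l) x)
     + yS Mh \<alpha> (\<lambda>_. 1) 0 x"

definition noise :: "real \<Rightarrow> real measure" where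
  "noise s2 = (if s2 = 0 then return borel 0 else density lborel (normal_density 0 (sqrt s2)))"

text \<open>History after t queries, as an extensional function on {..<t} of
  (query point, noisy observation). st t h u is the rule producing x_(t+1)
  from the history h of length t and the random vector u = U_(t+1).\<close>
primrec hist :: "(nat \<Rightarrow> (nat \<Rightarrow> 'a \<times> real) \<Rightarrow> 'u \<Rightarrow> 'a) \<Rightarrow> ('a \<Rightarrow> real)
    \<Rightarrow> (nat \<Rightarrow> 'u) \<Rightarrow> (nat \<Rightarrow> real) \<Rightarrow> nat \<Rightarrow> (nat \<Rightarrow> 'a \<times> real)" where
  "hist st y us es 0 = (\<lambda>_. undefined)"
| "hist st y us es (Suc t) =
     (let h = hist st y us es t; x = st t h (us t) in h(t := (x, y x + es t)))"

text \<open>An admissible algorithm: for every budget n, rules step n t (t < n) for the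
  queries, an output rule out n, distributions Um n t of the random vectors
  U_(t+1) and Us n of U_n^* (random vectors are modelled as real sequences,
  which contain every finite-dimensional random vector).  All U's and the noise
  are independent (product measure in exp_regret).\<close>
definition admissible ::
  "(nat \<Rightarrow> nat \<Rightarrow> (nat \<Rightarrow> (real^'d) \<times> real) \<Rightarrow> (nat \<Rightarrow> real) \<Rightarrow> real^'d)
   \<Rightarrow> (nat \<Rightarrow> (nat \<Rightarrow> (real^'d) \<times> real) \<Rightarrow> (nat \<Rightarrow> real) \<Rightarrow> real^'d)
   \<Rightarrow> (nat \<Rightarrow> nat \<Rightarrow> (nat \<Rightarrow> real) measure) \<Rightarrow> (nat \<Rightarrow> (nat \<Rightarrow> real) measure) \<Rightarrow> bool" where
  "admissible step out Um Us \<longleftrightarrow> (\<forall>n\<ge>1.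
      (\<forall>t<n. prob_space (Um n t) \<and> sets (Um n t) = sets borel)
    \<and> prob_space (Us n) \<and> sets (Us n) = sets borel
    \<and> (\<forall>t<n. (\<lambda>(h, u). step n t h u)
          \<in> (PiM {..<t} (\<lambda>_. borel) \<Otimes>\<^sub>M borel) \<rightarrow>\<^sub>M borel)
    \<and> (\<forall>t<n. \<forall>h u. step n t h u \<in> unit_cube)
    \<and> (\<lambda>(h, u). out n h u) \<in> (PiM {..<n} (\<lambda>_. borel) \<Otimes>\<^sub>M borel) \<rightarrow>\<^sub>M borel
    \<and> (\<forall>h u. out n h u \<in> (\<lambda>i. fst (h i)) ` {..<n}))"

definition opt :: "(real^'d \<Rightarrow> real) \<Rightarrow> real" where
  "opt y = (SUP x\<in>unit_cube. y x)"

text \<open>E[y(x^*) - y(hat x_n^*)] for budget n, objective y, noise variance s2.\<close>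
definition exp_regret ::
  "(nat \<Rightarrow> nat \<Rightarrow> (nat \<Rightarrow> (real^'d) \<times> real) \<Rightarrow> (nat \<Rightarrow> real) \<Rightarrow> real^'d)
   \<Rightarrow> (nat \<Rightarrow> (nat \<Rightarrow> (real^'d) \<times> real) \<Rightarrow> (nat \<Rightarrow> real) \<Rightarrow> real^'d)
   \<Rightarrow> (nat \<Rightarrow> nat \<Rightarrow> (nat \<Rightarrow> real) measure) \<Rightarrow> (nat \<Rightarrow> (nat \<Rightarrow> real) measure)
   \<Rightarrow> real \<Rightarrow> nat \<Rightarrow> (real^'d \<Rightarrow> real) \<Rightarrow> real" where
  "exp_regret step out Um Us s2 n y =
     (\<integral>\<omega>. opt y - y (out n (hist (step n) y (fst (fst \<omega>)) (snd \<omega>) n) (snd (fst \<omega>)))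
        \<partial>((PiM {..<n} (Um n) \<Otimes>\<^sub>M Us n) \<Otimes>\<^sub>M PiM {..<n} (\<lambda>_. noise s2)))"

end

theory Submission
  imports Defs
begin


lemma infnorm_Max_cart: "infnorm (v::real^'d) = Max (range (\<lambda>i. \<bar>v$i\<bar>))"
proof -
  have "{\<bar>v$i\<bar> |i. i\<in>UNIV} = range (\<lambda>i. \<bar>v$i\<bar>)" by auto
  then show ?thesis unfolding infnorm_cart by (simp add: cSup_eq_Max)
qed

lemma infnorm_le_iff: "infnorm (v::real^'d) \<le> r \<longleftrightarrow> (\<forall>i. \<bar>v$i\<bar> \<le> r)"
  unfolding infnorm_Max_cart by (subst Max_le_iff) auto

lemma infnorm_less_iff: "infnorm (v::real^'d) < r \<longleftrightarrow> (\<forall>i. \<bar>v$i\<bar> < r)"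
  unfolding infnorm_Max_cart by (subst Max_less_iff) auto

lemma gamma_pos: "gamma a > 0" by (simp add: gamma_def)
lemma gamma_Suc: "gamma a = 5 * gamma (Suc a)" by (simp add: gamma_def)
lemma gamma_mono: "b \<le> a \<Longrightarrow> gamma a \<le> gamma b"
  by (simp add: gamma_def frac_le power_increasing)

fun kap :: "(nat \<Rightarrow> 'd \<Rightarrow> nat) \<Rightarrow> nat \<Rightarrow> ('d::finite \<Rightarrow> nat)" where
  "kap w 0 = (\<lambda>_. 1)"
| "kap w (Suc a) = (\<lambda>i. 5 * kap w a i - 3 + w (Suc a) i)"

lemma kap_ge1: "kap w a i \<ge> 1"
  by (induction a) auto

lemma kap_le: "(\<forall>b\<in>{1..a}. \<forall>i. w b i \<le> 2) \<Longrightarrow> kap w a i \<le> 5 ^ a"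
proof (induction a)
  case 0 then show ?case by simp
next
  case (Suc a)
  then have "kap w a i \<le> 5 ^ a" "w (Suc a) i \<le> 2" by auto
  moreover have "kap w a i \<ge> 1" by (rule kap_ge1)
  ultimately show ?case by simp
qed

lemma kap_idx: "(\<forall>b\<in>{1..a}. \<forall>i. w b i \<le> 2) \<Longrightarrow> kap w a \<in> idx a"
  using kap_ge1 kap_le unfolding idx_def by blast

lemma kap_cong: "(\<forall>c\<in>{1..a}. w c = w' c) \<Longrightarrow> kap w a = kap w' a"
  by (induction a) auto

abbreviation cen :: "(nat \<Rightarrow> 'd \<Rightarrow> nat) \<Rightarrow> nat \<Rightarrow> real^'d::finite" where
  "cen w a \<equiv> center (kap w a) a"

lemma cen_comp: "cen w a $ i = (2 * real (kap w a i) - 1) * gamma a"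
  by (simp add: center_def)

lemma cen_Suc: "cen w (Suc a) $ i = cen w a $ i + 2 * gamma (Suc a) * (real (w (Suc a) i) - 1)"
proof -
  have k: "kap w a i \<ge> 1" by (rule kap_ge1)
  then have "real (5 * kap w a i - 3 + w (Suc a) i) = 5 * real (kap w a i) - 3 + real (w (Suc a) i)"
    by (simp add: of_nat_diff)
  then show ?thesis unfolding cen_comp gamma_Suc[of a] by (simp add: algebra_simps)
qed

lemma cen_dist: "b \<le> a \<Longrightarrow> (\<forall>c\<in>{1..a}. \<forall>i. w c i \<le> 2) \<Longrightarrow>
   \<bar>cen w a $ i - cen w b $ i\<bar> \<le> 5/2 * gamma (Suc b) - 5/2 * gamma (Suc a)"
proof (induction a)
  case 0 then show ?case by simp
next
  case (Suc a)
  show ?case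
  proof (cases "b = Suc a")
    case True then show ?thesis by simp
  next
    case False
    then have ba: "b \<le> a" using Suc by simp
    have IH: "\<bar>cen w a $ i - cen w b $ i\<bar> \<le> 5/2 * gamma (Suc b) - 5/2 * gamma (Suc a)"
      using Suc ba by auto
    have "w (Suc a) i \<le> 2" using Suc by auto
    then have "\<bar>real (w (Suc a) i) - 1\<bar> \<le> 1" by auto
    then have "\<bar>2 * gamma (Suc a) * (real (w (Suc a) i) - 1)\<bar> \<le> 2 * gamma (Suc a)"
      using gamma_pos[of "Suc a"] by (simp add: abs_mult mult_left_le)
    then show ?thesis using IH unfolding cen_Suc gamma_Suc[of "Suc a"] by linarith
  qed
qed


lemma center_unit: "\<kappa> \<in> idx a \<Longrightarrow> center \<kappa> a \<in> unit_cube"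
proof -
  assume k: "\<kappa> \<in> idx a"
  have "0 \<le> center \<kappa> a $ i \<and> center \<kappa> a $ i \<le> 1" for i
  proof -
    have "1 \<le> \<kappa> i" "\<kappa> i \<le> 5 ^ a" using k by (auto simp: idx_def)
    then have a1: "1 \<le> real (\<kappa> i)" and a2: "real (\<kappa> i) \<le> 5 ^ a"
      by (metis of_nat_1 of_nat_le_iff, metis of_nat_le_iff of_nat_numeral of_nat_power)
    have "center \<kappa> a $ i = (2 * real (\<kappa> i) - 1) / (2 * 5 ^ a)"
      by (simp add: center_def gamma_def)
    moreover have "(2 * real (\<kappa> i) - 1) \<le> 2 * 5 ^ a" using a2 by linarith
    moreover have p: "(0::real) < 2*5^a" by simp
    moreover have "0 \<le> 2 * real (\<kappa> i) - 1" using a1 by simp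
    ultimately show ?thesis by (simp add: divide_le_eq_1_pos)
  qed
  then show ?thesis by (simp add: unit_cube_def)
qed

lemma kap_arith: "1 \<le> (K::nat) \<Longrightarrow> K \<le> P \<Longrightarrow> W \<le> 2 \<Longrightarrow> 1 \<le> 5*K - 3 + W \<and> 5*K - 3 + W \<le> 5*P"
  by linarith

lemma parent_kap:
  assumes w: "\<forall>i. w (Suc a) i \<le> 2" and ki: "kap w a \<in> idx a"
  shows "parent (kap w (Suc a)) (Suc a) = kap w a"
proof -
  have wi: "\<bar>real (w (Suc a) i) - 1\<bar> \<le> 1" for i using w[rule_format, of i] by auto
  have g: "gamma (Suc a) > 0" by (rule gamma_pos)
  have step: "\<bar>cen w (Suc a) $ i - cen w a $ i\<bar> \<le> 2 * gamma (Suc a)" for i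
    unfolding cen_Suc using wi[of i] g by (simp add: abs_mult mult_left_le)
  have kS: "kap w (Suc a) \<in> idx (Suc a)"
  proof -
    have "1 \<le> kap w (Suc a) i \<and> kap w (Suc a) i \<le> 5 ^ Suc a" for i
    proof -
      have "kap w a i \<le> 5 ^ a" using ki by (auto simp: idx_def)
      moreover have "kap w a i \<ge> 1" by (rule kap_ge1)
      moreover have "w (Suc a) i \<le> 2" using w by blast
      ultimately show ?thesis using kap_arith[of "kap w a i" "5^a" "w (Suc a) i"] by simp
    qed
    then show ?thesis by (simp add: idx_def)
  qed
  have sub: "cell (kap w (Suc a)) (Suc a) \<subseteq> cell (kap w a) a"
  proof
    fix x assume "x \<in> cell (kap w (Suc a)) (Suc a)"
    then have xu: "x \<in> unit_cube" and xl: "\<forall>i. \<bar>(x - cen w (Suc a)) $ i\<bar> < gamma (Suc a)"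
      by (auto simp: cell_def infnorm_less_iff)
    have "\<bar>(x - cen w a) $ i\<bar> < gamma a" for i
      using xl[rule_format, of i] step[of i] g unfolding gamma_Suc[of a] by simp
    then show "x \<in> cell (kap w a) a" using xu by (simp add: cell_def infnorm_less_iff)
  qed
  have uniq: "\<kappa>' = kap w a" if sub': "cell (kap w (Suc a)) (Suc a) \<subseteq> cell \<kappa>' a" for \<kappa>'
  proof
    fix i
    have "cen w (Suc a) \<in> cell (kap w (Suc a)) (Suc a)"
      using center_unit[OF kS] g by (simp add: cell_def infnorm_0)
    then have "cen w (Suc a) \<in> cell \<kappa>' a" using sub' by blast
    then have "\<bar>cen w (Suc a) $ i - center \<kappa>' a $ i\<bar> < gamma a"
      by (auto simp: cell_def infnorm_less_iff)
    then have "\<bar>cen w a $ i - center \<kappa>' a $ i\<bar> < 7 * gamma (Suc a)"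
      using step[of i] unfolding gamma_Suc[of a] by linarith
    moreover have "cen w a $ i - center \<kappa>' a $ i = (10 * (real (kap w a i) - real (\<kappa>' i))) * gamma (Suc a)"
      by (simp add: center_def gamma_Suc[of a] algebra_simps)
    ultimately have "\<bar>10 * (real (kap w a i) - real (\<kappa>' i))\<bar> * gamma (Suc a) < 7 * gamma (Suc a)"
      using g by (simp add: abs_mult)
    then have "\<bar>10 * (real (kap w a i) - real (\<kappa>' i))\<bar> < 7" using g by simp
    then have "\<bar>real (kap w a i) - real (\<kappa>' i)\<bar> < 1" by simp
    then show "\<kappa>' i = kap w a i" by linarith
  qed
  show ?thesis unfolding parent_def
  proof (rule the_equality)
    show "kap w a \<in> idx (Suc a - 1) \<and> cell (kap w (Suc a)) (Suc a) \<subseteq> cell (kap w a) (Suc a - 1)"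
      using ki sub by (simp only: diff_Suc_1 simp_thms)
    fix \<kappa>' assume "\<kappa>' \<in> idx (Suc a - 1) \<and> cell (kap w (Suc a)) (Suc a) \<subseteq> cell \<kappa>' (Suc a - 1)"
    then show "\<kappa>' = kap w a" using uniq[of \<kappa>'] by (simp only: diff_Suc_1)
  qed
qed

lemma kap_Uidx: "(\<forall>b\<in>{1..a}. \<forall>i. w b i \<le> 2) \<Longrightarrow> kap w a \<in> Uidx a"
proof (induction a)
  case 0 then show ?case by (simp add: fun_eq_iff)
next
  case (Suc a)
  have ki: "kap w a \<in> idx a" using Suc by (intro kap_idx) auto
  have ws: "\<forall>i. w (Suc a) i \<le> 2" using Suc by auto
  have p: "parent (kap w (Suc a)) (Suc a) = kap w a" by (rule parent_kap[OF ws ki])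
  have kS: "kap w (Suc a) \<in> idx (Suc a)" using Suc.prems by (intro kap_idx) auto
  have "\<bar>cen w (Suc a) $ i - cen w a $ i\<bar> \<le> 2 * gamma (Suc a)" for i
  proof -
    have "\<bar>real (w (Suc a) i) - 1\<bar> \<le> 1" using ws[rule_format, of i] by auto
    then show ?thesis unfolding cen_Suc using gamma_pos[of "Suc a"] by (simp add: abs_mult mult_left_le)
  qed
  then have "infnorm (cen w (Suc a) - cen w a) \<le> 2 * gamma (Suc a)"
    by (simp add: infnorm_le_iff)
  then show ?case using Suc kS p by auto
qed

lemma piter_kap: "(\<forall>b\<in>{1..A}. \<forall>i. w b i \<le> 2) \<Longrightarrow> l \<le> A \<Longrightarrow> piter l (kap w A) A = kap w (A - l)"
proof (induction l)
  case 0 then show ?case by simp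
next
  case (Suc l)
  then have IH: "piter l (kap w A) A = kap w (A - l)" by simp
  obtain m where m: "A - l = Suc m" "A - Suc l = m" using Suc.prems by (metis Suc_diff_Suc Suc_le_lessD)
  have ws: "\<forall>i. w (Suc m) i \<le> 2" using Suc.prems m by (metis Suc_leI atLeastAtMost_iff diff_le_self le_add1 plus_1_eq_Suc zero_less_Suc)
  have ki: "kap w m \<in> idx m" using Suc.prems m by (intro kap_idx) auto
  show ?case using IH m parent_kap[OF ws ki] by simp
qed


lemma powr53: "\<alpha> > 0 \<Longrightarrow> 3 powr \<alpha> < (5::real) powr \<alpha>"
  by (simp add: powr_less_mono2)

lemma yS_zero: "\<alpha> > 0 \<Longrightarrow> infnorm (x - center \<kappa> a) \<ge> gamma a \<Longrightarrow> yS Mh \<alpha> \<kappa> a x = 0"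
proof -
  assume al: "\<alpha> > 0" and r: "infnorm (x - center \<kappa> a) \<ge> gamma a"
  have g: "gamma (a+1) > 0" by (rule gamma_pos)
  show ?thesis
  proof (cases "infnorm (x - center \<kappa> a) = 5 * gamma (a + 1)")
    case True
    have "(5 * gamma (a+1)) powr \<alpha> = 5 powr \<alpha> * gamma (a+1) powr \<alpha>"
      using g by (simp add: powr_mult)
    then show ?thesis unfolding yS_def Let_def True using g by simp
  next
    case False
    then have "infnorm (x - center \<kappa> a) > 5 * gamma (a + 1)"
      using r gamma_Suc[of a] by simp
    then show ?thesis unfolding yS_def Let_def using g by simp
  qed
qed

lemma yS_le: "\<alpha> > 0 \<Longrightarrow> Mh \<ge> 0 \<Longrightarrow> yS Mh \<alpha> \<kappa> a x \<le> Mh * (5 powr \<alpha> - 3 powr \<alpha>) * gamma (a + 1) powr \<alpha>"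
proof -
  assume al: "\<alpha> > 0" and M: "Mh \<ge> 0"
  define r where "r = infnorm (x - center \<kappa> a)"
  have g: "gamma (a+1) > 0" by (rule gamma_pos)
  have pl: "0 \<le> Mh * (5 powr \<alpha> - 3 powr \<alpha>) * gamma (a + 1) powr \<alpha>"
    using M powr53[OF al] by simp
  have "Mh * 5 powr \<alpha> * gamma (a + 1) powr \<alpha> - Mh * r powr \<alpha> \<le> Mh * (5 powr \<alpha> - 3 powr \<alpha>) * gamma (a + 1) powr \<alpha>"
    if "r > 3 * gamma (a+1)"
  proof -
    have "(3 * gamma (a+1)) powr \<alpha> \<le> r powr \<alpha>" using that g al by (intro powr_mono2) auto
    then have "3 powr \<alpha> * gamma (a+1) powr \<alpha> \<le> r powr \<alpha>" using g by (simp add: powr_mult)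
    then have "Mh * (3 powr \<alpha> * gamma (a+1) powr \<alpha>) \<le> Mh * r powr \<alpha>" using M by (rule mult_left_mono)
    then show ?thesis by (simp add: algebra_simps)
  qed
  then show ?thesis unfolding yS_def Let_def r_def[symmetric] using pl by auto
qed

lemma yS_ge0: "\<alpha> > 0 \<Longrightarrow> Mh \<ge> 0 \<Longrightarrow> yS Mh \<alpha> \<kappa> a x \<ge> 0"
proof -
  assume al: "\<alpha> > 0" and M: "Mh \<ge> 0"
  define r where "r = infnorm (x - center \<kappa> a)"
  have g: "gamma (a+1) > 0" by (rule gamma_pos)
  have pl: "0 \<le> Mh * (5 powr \<alpha> - 3 powr \<alpha>) * gamma (a + 1) powr \<alpha>"
    using M powr53[OF al] by simp
  have "0 \<le> Mh * 5 powr \<alpha> * gamma (a + 1) powr \<alpha> - Mh * r powr \<alpha>"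
    if "r \<le> 5 * gamma (a+1)"
  proof -
    have "r powr \<alpha> \<le> (5 * gamma (a+1)) powr \<alpha>" using that g al by (intro powr_mono2) (auto simp: r_def infnorm_pos_le)
    then have "r powr \<alpha> \<le> 5 powr \<alpha> * gamma (a+1) powr \<alpha>" using g by (simp add: powr_mult)
    then have "Mh * r powr \<alpha> \<le> Mh * (5 powr \<alpha> * gamma (a+1) powr \<alpha>)" using M by (rule mult_left_mono)
    then show ?thesis by (simp add: algebra_simps)
  qed
  then show ?thesis unfolding yS_def Let_def r_def[symmetric] using pl by auto
qed

lemma yS_plateau: "infnorm (x - center \<kappa> a) \<le> 3 * gamma (a+1) \<Longrightarrow>
   yS Mh \<alpha> \<kappa> a x = Mh * (5 powr \<alpha> - 3 powr \<alpha>) * gamma (a + 1) powr \<alpha>"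
  unfolding yS_def Let_def by simp

lemma yD_zero: "infnorm (x - center \<kappa> a) \<ge> gamma a \<Longrightarrow> \<alpha> > 0 \<Longrightarrow> yD Mh \<alpha> \<kappa> a x = 0"
  unfolding yD_def Let_def by auto

lemma yD_le: "\<alpha> > 0 \<Longrightarrow> Mh \<ge> 0 \<Longrightarrow> yD Mh \<alpha> \<kappa> a x \<le> Mh * gamma a powr \<alpha>"
  unfolding yD_def Let_def using gamma_pos[of a] by (auto simp: mult_nonneg_nonneg)

lemma yD_ge0: "\<alpha> > 0 \<Longrightarrow> Mh \<ge> 0 \<Longrightarrow> yD Mh \<alpha> \<kappa> a x \<ge> 0"
proof -
  assume al: "\<alpha> > 0" and M: "Mh \<ge> 0"
  have "Mh * infnorm (x - center \<kappa> a) powr \<alpha> \<le> Mh * gamma a powr \<alpha>" if "infnorm (x - center \<kappa> a) \<le> gamma a"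
    using that al M by (intro mult_left_mono powr_mono2) (auto simp: infnorm_pos_le)
  then show ?thesis unfolding yD_def Let_def by auto
qed

lemma yD_center: "yD Mh \<alpha> \<kappa> a (center \<kappa> a) = Mh * gamma a powr \<alpha>"
  unfolding yD_def Let_def using gamma_pos[of a] by (simp add: infnorm_0)


definition Qc :: "(nat \<Rightarrow> 'd \<Rightarrow> nat) \<Rightarrow> nat \<Rightarrow> (real^'d::finite) set" where
  "Qc w a = {x. infnorm (x - cen w a) < gamma a}"

abbreviation okw :: "(nat \<Rightarrow> 'd \<Rightarrow> nat) \<Rightarrow> nat \<Rightarrow> bool" where
  "okw w A \<equiv> (\<forall>b\<in>{1..A}. \<forall>i. w b i \<le> 2)"

lemma yC_kap:
  assumes ok: "okw w A" and A: "A \<ge> 1"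
  shows "yC Mh \<alpha> A (kap w A) x = (\<Sum>a<A. yS Mh \<alpha> (kap w a) a x) + yD Mh \<alpha> (kap w A) A x"
proof -
  have "(\<Sum>l\<in>{1..A - 1}. yS Mh \<alpha> (piter l (kap w A) A) (A - l) x)
      = (\<Sum>l\<in>{1..A - 1}. yS Mh \<alpha> (kap w (A - l)) (A - l) x)"
    by (rule sum.cong) (use piter_kap[OF ok] in auto)
  also have "\<dots> = (\<Sum>a\<in>{1..A - 1}. yS Mh \<alpha> (kap w a) a x)"
    by (rule sum.reindex_bij_witness[where i="\<lambda>a. A - a" and j="\<lambda>a. A - a"]) auto
  finally have s: "(\<Sum>l\<in>{1..A - 1}. yS Mh \<alpha> (piter l (kap w A) A) (A - l) x) = (\<Sum>a\<in>{1..A - 1}. yS Mh \<alpha> (kap w a) a x)" .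
  have "{..<A} = insert 0 {1..A - 1}" using A by auto
  then have "(\<Sum>a<A. yS Mh \<alpha> (kap w a) a x) = yS Mh \<alpha> (kap w 0) 0 x + (\<Sum>a\<in>{1..A - 1}. yS Mh \<alpha> (kap w a) a x)"
    by simp
  then show ?thesis unfolding yC_def s by simp
qed

lemma yC_cong:
  assumes ok: "okw w A" "okw w' A" and A: "A \<ge> 1" and al: "\<alpha> > 0"
    and C: "\<forall>a\<in>{1..A}. (\<forall>c\<in>{1..a}. w c = w' c) \<or> (x \<notin> Qc w a \<and> x \<notin> Qc w' a)"
  shows "yC Mh \<alpha> A (kap w A) x = yC Mh \<alpha> A (kap w' A) x"
proof -
  have "yS Mh \<alpha> (kap w a) a x = yS Mh \<alpha> (kap w' a) a x" if "a < A" for a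
  proof (cases "a = 0")
    case True then show ?thesis by simp
  next
    case False
    then have "a \<in> {1..A}" using that by auto
    then have "(\<forall>c\<in>{1..a}. w c = w' c) \<or> (x \<notin> Qc w a \<and> x \<notin> Qc w' a)" using C by blast
    then show ?thesis
    proof
      assume "\<forall>c\<in>{1..a}. w c = w' c" then show ?thesis using kap_cong[of a w w'] by simp
    next
      assume "x \<notin> Qc w a \<and> x \<notin> Qc w' a"
      then have "gamma a \<le> infnorm (x - cen w a)" "gamma a \<le> infnorm (x - cen w' a)"
        by (auto simp add: Qc_def not_less)
      then show ?thesis using yS_zero[OF al, where \<kappa>="kap w a" and a=a and x=x and Mh=Mh] yS_zero[OF al, where \<kappa>="kap w' a" and a=a and x=x and Mh=Mh] by simp
    qed
  qed
  moreover have "yD Mh \<alpha> (kap w A) A x = yD Mh \<alpha> (kap w' A) A x"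
  proof -
    have "A \<in> {1..A}" using A by auto
    then have "(\<forall>c\<in>{1..A}. w c = w' c) \<or> (x \<notin> Qc w A \<and> x \<notin> Qc w' A)" using C by blast
    then show ?thesis
    proof
      assume "\<forall>c\<in>{1..A}. w c = w' c" then show ?thesis using kap_cong[of A w w'] by simp
    next
      assume "x \<notin> Qc w A \<and> x \<notin> Qc w' A"
      then have "gamma A \<le> infnorm (x - cen w A)" "gamma A \<le> infnorm (x - cen w' A)"
        by (auto simp add: Qc_def not_less)
      then show ?thesis using yD_zero[OF _ al, where \<kappa>="kap w A" and a=A and x=x and Mh=Mh] yD_zero[OF _ al, where \<kappa>="kap w' A" and a=A and x=x and Mh=Mh] by simp
    qed
  qed
  ultimately show ?thesis unfolding yC_kap[OF ok(1) A] yC_kap[OF ok(2) A] by simp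
qed

definition PL :: "real \<Rightarrow> real \<Rightarrow> nat \<Rightarrow> real" where
  "PL Mh \<alpha> A = (\<Sum>a<A. Mh * (5 powr \<alpha> - 3 powr \<alpha>) * gamma (a + 1) powr \<alpha>)"

lemma yC_bounds:
  assumes ok: "okw w A" and A: "A \<ge> 1" and al: "\<alpha> > 0" and M: "Mh > 0"
  shows "0 \<le> yC Mh \<alpha> A (kap w A) x \<and> yC Mh \<alpha> A (kap w A) x \<le> PL Mh \<alpha> A + yD Mh \<alpha> (kap w A) A x"
proof -
  have M0: "Mh \<ge> 0" using M by simp
  have "(\<Sum>a<A. yS Mh \<alpha> (kap w a) a x) \<le> PL Mh \<alpha> A"
    unfolding PL_def by (rule sum_mono) (use yS_le[OF al M0] in auto)
  moreover have "0 \<le> (\<Sum>a<A. yS Mh \<alpha> (kap w a) a x)"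
    by (rule sum_nonneg) (use yS_ge0[OF al M0] in auto)
  moreover have "0 \<le> yD Mh \<alpha> (kap w A) A x" using yD_ge0[OF al M0] by auto
  ultimately show ?thesis unfolding yC_kap[OF ok A] by simp
qed

lemma yC_center:
  assumes ok: "okw w A" and A: "A \<ge> 1" and al: "\<alpha> > 0"
  shows "yC Mh \<alpha> A (kap w A) (cen w A) = PL Mh \<alpha> A + Mh * gamma A powr \<alpha>"
proof -
  have "yS Mh \<alpha> (kap w a) a (cen w A) = Mh * (5 powr \<alpha> - 3 powr \<alpha>) * gamma (a + 1) powr \<alpha>" if "a < A" for a
  proof (rule yS_plateau)
    have "\<bar>(cen w A - cen w a) $ i\<bar> \<le> 3 * gamma (a+1)" for i
    proof -
      have "\<bar>cen w A $ i - cen w a $ i\<bar> \<le> 5/2 * gamma (Suc a) - 5/2 * gamma (Suc A)"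
        using cen_dist[of a A w i] that ok by auto
      then show ?thesis using gamma_pos[of "Suc A"] gamma_pos[of "Suc a"] by simp
    qed
    then show "infnorm (cen w A - center (kap w a) a) \<le> 3 * gamma (a + 1)"
      by (simp add: infnorm_le_iff)
  qed
  then show ?thesis unfolding yC_kap[OF ok A] PL_def yD_center by simp
qed

lemma opt_yC:
  assumes ok: "okw w A" and A: "A \<ge> 1" and al: "\<alpha> > 0" and M: "Mh > 0"
  shows "opt (yC Mh \<alpha> A (kap w A)) = PL Mh \<alpha> A + Mh * gamma A powr \<alpha>"
proof -
  let ?y = "yC Mh \<alpha> A (kap w A)"
  have cu: "cen w A \<in> unit_cube" using center_unit kap_idx[OF ok] by blast
  have up: "?y x \<le> PL Mh \<alpha> A + Mh * gamma A powr \<alpha>" for x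
    using yC_bounds[OF ok A al M, of x] yD_le[OF al, of Mh "kap w A" A x] M by simp
  have "opt ?y \<le> PL Mh \<alpha> A + Mh * gamma A powr \<alpha>"
    unfolding opt_def by (rule cSUP_least) (use cu up in auto)
  moreover have "?y (cen w A) \<le> opt ?y"
    unfolding opt_def by (rule cSUP_upper) (use cu up in \<open>auto intro!: bdd_aboveI2[where M="PL Mh \<alpha> A + Mh * gamma A powr \<alpha>"]\<close>)
  ultimately show ?thesis using yC_center[OF ok A al] by simp
qed

lemma regret_bounds:
  assumes ok: "okw w A" and A: "A \<ge> 1" and al: "\<alpha> > 0" and M: "Mh > 0"
  shows "0 \<le> opt (yC Mh \<alpha> A (kap w A)) - yC Mh \<alpha> A (kap w A) x"
    and "opt (yC Mh \<alpha> A (kap w A)) - yC Mh \<alpha> A (kap w A) x \<le> PL Mh \<alpha> A + Mh * gamma A powr \<alpha>"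
    and "x \<notin> Qc w A \<Longrightarrow> Mh * gamma A powr \<alpha> \<le> opt (yC Mh \<alpha> A (kap w A)) - yC Mh \<alpha> A (kap w A) x"
proof -
  have b: "0 \<le> yC Mh \<alpha> A (kap w A) x" "yC Mh \<alpha> A (kap w A) x \<le> PL Mh \<alpha> A + yD Mh \<alpha> (kap w A) A x"
    using yC_bounds[OF ok A al M] by auto
  have d: "yD Mh \<alpha> (kap w A) A x \<le> Mh * gamma A powr \<alpha>" using yD_le[OF al, of Mh] M by auto
  show "0 \<le> opt (yC Mh \<alpha> A (kap w A)) - yC Mh \<alpha> A (kap w A) x"
    unfolding opt_yC[OF ok A al M] using b d by simp
  show "opt (yC Mh \<alpha> A (kap w A)) - yC Mh \<alpha> A (kap w A) x \<le> PL Mh \<alpha> A + Mh * gamma A powr \<alpha>"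
    unfolding opt_yC[OF ok A al M] using b d by simp
  assume "x \<notin> Qc w A"
  then have "yD Mh \<alpha> (kap w A) A x = 0" using yD_zero[OF _ al] by (simp add: Qc_def not_less)
  then show "Mh * gamma A powr \<alpha> \<le> opt (yC Mh \<alpha> A (kap w A)) - yC Mh \<alpha> A (kap w A) x"
    unfolding opt_yC[OF ok A al M] using b by simp
qed


lemma hist_ext: "t \<le> i \<Longrightarrow> hist st y us es t i = undefined"
  by (induction t) (auto simp: Let_def)

lemma hist_at: "i < t \<Longrightarrow> hist st y us es t i =
   (st i (hist st y us es i) (us i), y (st i (hist st y us es i) (us i)) + es i)"
proof (induction t)
  case 0 then show ?case by simp
next
  case (Suc t) then show ?case by (cases "i = t") (auto simp: Let_def)
qed

lemma tree_count:
  fixes st :: "nat \<Rightarrow> (nat \<Rightarrow> 'a \<times> real) \<Rightarrow> 'u \<Rightarrow> 'a" and Y :: "(nat \<Rightarrow> 'e) \<Rightarrow> 'a \<Rightarrow> real"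
    and Q :: "(nat \<Rightarrow> 'e) \<Rightarrow> nat \<Rightarrow> 'a set" and T :: "(nat \<Rightarrow> 'e) set"
  assumes A: "A \<ge> 1"
    and nest: "\<And>w x a b. w \<in> T \<Longrightarrow> x \<in> Q w a \<Longrightarrow> 1 \<le> b \<Longrightarrow> b \<le> a \<Longrightarrow> a \<le> A \<Longrightarrow> x \<in> Q w b"
    and disj: "\<And>w w' b x. w \<in> T \<Longrightarrow> w' \<in> T \<Longrightarrow> b \<in> {1..A} \<Longrightarrow> (\<forall>c\<in>{1..<b}. w c = w' c)
               \<Longrightarrow> w b \<noteq> w' b \<Longrightarrow> x \<in> Q w b \<Longrightarrow> x \<in> Q w' b \<Longrightarrow> False"
    and val: "\<And>w w' x. w \<in> T \<Longrightarrow> w' \<in> T \<Longrightarrow>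
               (\<forall>a\<in>{1..A}. (\<forall>c\<in>{1..a}. w c = w' c) \<or> (x \<notin> Q w a \<and> x \<notin> Q w' a)) \<Longrightarrow> Y w x = Y w' x"
    and ext: "\<And>w w'. w \<in> T \<Longrightarrow> w' \<in> T \<Longrightarrow> (\<forall>c\<in>{1..A}. w c = w' c) \<Longrightarrow> w = w'"
  shows "card {w\<in>T. \<exists>t<n. st t (hist st (Y w) us es t) (us t) \<in> Q w A} \<le> (n + A - 1) choose A"
proof -
  define xq where "xq w t = st t (hist st (Y w) us es t) (us t)" for w t
  define S where "S = {w\<in>T. \<exists>t<n. xq w t \<in> Q w A}"
  define \<tau> where "\<tau> w a = (LEAST t. xq w t \<in> Q w a)" for w a
  have tauS: "\<tau> w a < n \<and> xq w (\<tau> w a) \<in> Q w a" if wS: "w \<in> S" and aA: "a \<in> {1..A}" for w a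
  proof -
    obtain t where t: "t < n" "xq w t \<in> Q w A" using wS by (auto simp: S_def)
    then have "xq w t \<in> Q w a" using nest[of w "xq w t" A a] wS aA A by (auto simp: S_def)
    then show ?thesis unfolding \<tau>_def using t by (metis (mono_tags, lifting) LeastI Least_le le_less_trans)
  qed
  have taumin: "\<tau> w a \<le> t" if "xq w t \<in> Q w a" for w a t
    unfolding \<tau>_def using that by (rule Least_le)
  have taumono: "\<tau> w b \<le> \<tau> w a" if "w \<in> S" "1 \<le> b" "b \<le> a" "a \<le> A" for w a b
  proof -
    have "xq w (\<tau> w a) \<in> Q w a" using tauS[of w a] that by auto
    then have "xq w (\<tau> w a) \<in> Q w b" using nest[of w _ a b] that by (auto simp: S_def)
    then show ?thesis by (rule taumin)
  qed
  have main: "w = w'" if w: "w \<in> S" "w' \<in> S" and eq: "\<forall>a\<in>{1..A}. \<tau> w a = \<tau> w' a" for w w'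
  proof -
    have wT: "w \<in> T" "w' \<in> T" using w by (auto simp: S_def)
    have "t \<le> n \<longrightarrow> hist st (Y w) us es t = hist st (Y w') us es t \<and> (\<forall>a\<in>{1..A}. \<tau> w a < t \<longrightarrow> w a = w' a)" for t
    proof (induction t)
      case 0 then show ?case by simp
    next
      case (Suc t)
      show ?case
      proof
        assume tn: "Suc t \<le> n"
        then have H: "hist st (Y w) us es t = hist st (Y w') us es t"
          and K: "\<forall>a\<in>{1..A}. \<tau> w a < t \<longrightarrow> w a = w' a" using Suc by auto
        have xeq: "xq w t = xq w' t" unfolding xq_def H ..
        define x where "x = xq w t"
        have K': "a \<in> {1..A} \<longrightarrow> \<tau> w a < Suc t \<longrightarrow> w a = w' a" for a
        proof (induction a rule: less_induct)
          case (less a)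
          show ?case
          proof (intro impI)
            assume aA: "a \<in> {1..A}" and ta: "\<tau> w a < Suc t"
            show "w a = w' a"
            proof (rule ccontr)
              assume ne: "w a \<noteq> w' a"
              have below: "\<forall>c\<in>{1..<a}. w c = w' c"
              proof
                fix c assume c: "c \<in> {1..<a}"
                then have "\<tau> w c \<le> \<tau> w a" using taumono[OF w(1), of c a] aA by auto
                then show "w c = w' c" using less.IH[of c] c aA ta by auto
              qed
              have "\<tau> w a = t" using K aA ta ne by (meson less_SucE)
              then have "x \<in> Q w a" "x \<in> Q w' a"
                using tauS[OF w(1) aA] tauS[OF w(2) aA] eq aA xeq by (auto simp: x_def)
              then show False using disj[OF wT aA below ne] by blast
            qed
          qed
        qed
        have yeq: "Y w x = Y w' x"
        proof (rule val[OF wT], intro ballI)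
          fix a assume aA: "a \<in> {1..A}"
          show "(\<forall>c\<in>{1..a}. w c = w' c) \<or> (x \<notin> Q w a \<and> x \<notin> Q w' a)"
          proof (cases "\<forall>c\<in>{1..a}. \<tau> w c < Suc t")
            case True
            then show ?thesis using K' aA by auto
          next
            case False
            then obtain c where c: "c \<in> {1..a}" "\<tau> w c > t" by (auto simp: not_less)
            have "x \<notin> Q w c" using taumin[of w t c] c by (auto simp: x_def)
            moreover have "x \<notin> Q w' c" using taumin[of w' t c] c eq aA xeq by (auto simp: x_def)
            ultimately show ?thesis using nest[OF wT(1), of x a c] nest[OF wT(2), of x a c] c aA by auto
          qed
        qed
        have "hist st (Y w) us es (Suc t) = hist st (Y w') us es (Suc t)"
          using H xeq yeq by (simp add: Let_def xq_def x_def)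
        then show "hist st (Y w) us es (Suc t) = hist st (Y w') us es (Suc t) \<and>
            (\<forall>a\<in>{1..A}. \<tau> w a < Suc t \<longrightarrow> w a = w' a)" using K' by blast
      qed
    qed
    then have "\<forall>a\<in>{1..A}. \<tau> w a < n \<longrightarrow> w a = w' a" by blast
    then have "\<forall>a\<in>{1..A}. w a = w' a" using tauS[OF w(1)] by blast
    then show ?thesis by (rule ext[OF wT])
  qed
  define E where "E w = (\<lambda>a. \<tau> w a + a) ` {1..A}" for w
  have smono: "\<tau> w a + a < \<tau> w a' + a'" if "w \<in> S" "a \<in> {1..A}" "a' \<in> {1..A}" "a < a'" for w a a'
    using taumono[of w a a'] that by auto
  have Esub: "E w \<in> {B. B \<subseteq> {1..n + A - 1} \<and> card B = A}" if w: "w \<in> S" for w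
  proof -
    have "E w \<subseteq> {1..n + A - 1}"
    proof
      fix z assume "z \<in> E w"
      then obtain a where a: "a \<in> {1..A}" "z = \<tau> w a + a" by (auto simp: E_def)
      then have "\<tau> w a < n" using tauS[OF w a(1)] by simp
      then show "z \<in> {1..n + A - 1}" using a by auto
    qed
    moreover have "inj_on (\<lambda>a. \<tau> w a + a) {1..A}"
    proof (rule inj_onI)
      fix a a' assume "a \<in> {1..A}" "a' \<in> {1..A}" "\<tau> w a + a = \<tau> w a' + a'"
      then show "a = a'" using smono[OF w, of a a'] smono[OF w, of a' a] by (metis less_irrefl linorder_neqE_nat)
    qed
    then have "card (E w) = A" by (simp add: E_def card_image)
    ultimately show ?thesis by simp
  qed
  have Einj: "inj_on E S"
  proof (rule inj_onI)
    fix w w' assume w: "w \<in> S" "w' \<in> S" and Ee: "E w = E w'"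
    define L where "L v = map (\<lambda>a. \<tau> v a + a) [1..<A+1]" for v
    have ss: "sorted_wrt (<) (L v)" if "v \<in> S" for v
      unfolding L_def sorted_wrt_map
      by (rule sorted_wrt_mono_rel[OF _ sorted_wrt_upt]) (use smono[OF that] in auto)
    have st: "set [1..<A+1] = {1..A}" by auto
    have "set (L w) = set (L w')" using Ee unfolding L_def E_def set_map st .
    then have "L w = L w'" using ss[OF w(1)] ss[OF w(2)] by (metis strict_sorted_iff sorted_distinct_set_unique)
    then have "\<forall>a\<in>{1..A}. \<tau> w a = \<tau> w' a" by (auto simp: L_def)
    then show "w = w'" by (rule main[OF w])
  qed
  have "card S = card (E ` S)" using Einj by (simp add: card_image)
  also have "\<dots> \<le> card {B. B \<subseteq> {1..n + A - 1} \<and> card B = A}"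
    by (rule card_mono) (use Esub in auto)
  also have "\<dots> = (n + A - 1) choose A" by (simp add: n_subsets)
  finally show ?thesis by (simp add: S_def xq_def)
qed


lemma infnorm_meas[measurable]: "(\<lambda>x::real^'d. infnorm (x - c)) \<in> borel_measurable borel"
  by (intro borel_measurable_continuous_onI continuous_intros)

lemma yC_meas[measurable]: "yC Mh \<alpha> A \<kappa> \<in> borel_measurable borel"
  unfolding yC_def yS_def yD_def Let_def by measurable

lemma hist_Suc_same: "hist st y us es (Suc t) t = (st t (hist st y us es t) (us t), y (st t (hist st y us es t) (us t)) + es t)"
  by (simp add: Let_def)

lemma hist_Suc_other: "i \<noteq> t \<Longrightarrow> hist st y us es (Suc t) i = hist st y us es t i"
  by (simp add: Let_def)

lemma hist_meas:
  fixes st :: "nat \<Rightarrow> (nat \<Rightarrow> (real^'d::finite) \<times> real) \<Rightarrow> (nat \<Rightarrow> real) \<Rightarrow> real^'d"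
    and y :: "real^'d \<Rightarrow> real"
  assumes Um: "\<And>t. t < n \<Longrightarrow> sets (Um t) = sets borel"
    and N: "sets N = sets borel"
    and st: "\<And>t. t < n \<Longrightarrow> (\<lambda>(h, u). st t h u) \<in> (PiM {..<t} (\<lambda>_. borel) \<Otimes>\<^sub>M borel) \<rightarrow>\<^sub>M borel"
    and y: "y \<in> borel_measurable borel"
  shows "t \<le> n \<Longrightarrow> (\<lambda>\<omega>. hist st y (fst (fst \<omega>)) (snd \<omega>) t)
     \<in> ((PiM {..<n} Um \<Otimes>\<^sub>M Us) \<Otimes>\<^sub>M PiM {..<n} (\<lambda>_. N)) \<rightarrow>\<^sub>M PiM {..<t} (\<lambda>_. borel)"
proof (induction t)
  case 0
  show ?case unfolding hist.simps by (rule measurable_const) (simp add: space_PiM)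
next
  case (Suc t)
  let ?\<Omega> = "(PiM {..<n} Um \<Otimes>\<^sub>M Us) \<Otimes>\<^sub>M PiM {..<n} (\<lambda>_. N)"
  let ?H = "\<lambda>\<omega>. hist st y (fst (fst \<omega>)) (snd \<omega>) t"
  have tn: "t < n" using Suc.prems by simp
  have IH: "?H \<in> ?\<Omega> \<rightarrow>\<^sub>M PiM {..<t} (\<lambda>_. borel)" using Suc by simp
  have U: "(\<lambda>\<omega>. fst (fst \<omega>) t) \<in> ?\<Omega> \<rightarrow>\<^sub>M borel"
  proof -
    have "(\<lambda>\<omega>. fst (fst \<omega>) t) \<in> ?\<Omega> \<rightarrow>\<^sub>M Um t"
      apply measurable using tn by simp
    then show ?thesis using measurable_cong_sets[OF refl Um[OF tn]] by blast
  qed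
  have E: "(\<lambda>\<omega>. snd \<omega> t) \<in> ?\<Omega> \<rightarrow>\<^sub>M borel"
  proof -
    have "(\<lambda>\<omega>. snd \<omega> t) \<in> ?\<Omega> \<rightarrow>\<^sub>M N"
      apply measurable using tn by simp
    then show ?thesis using measurable_cong_sets[OF refl N] by blast
  qed
  have X: "(\<lambda>\<omega>. st t (?H \<omega>) (fst (fst \<omega>) t)) \<in> ?\<Omega> \<rightarrow>\<^sub>M borel"
    using measurable_compose[OF measurable_Pair[OF IH U] st[OF tn]] by simp
  have XY: "(\<lambda>\<omega>. (st t (?H \<omega>) (fst (fst \<omega>) t), y (st t (?H \<omega>) (fst (fst \<omega>) t)) + snd \<omega> t))
      \<in> ?\<Omega> \<rightarrow>\<^sub>M (borel :: ((real^'d) \<times> real) measure)"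
  proof -
    have "(\<lambda>\<omega>. (st t (?H \<omega>) (fst (fst \<omega>) t), y (st t (?H \<omega>) (fst (fst \<omega>) t)) + snd \<omega> t))
      \<in> ?\<Omega> \<rightarrow>\<^sub>M (borel \<Otimes>\<^sub>M borel)"
      by (intro measurable_Pair X borel_measurable_add E measurable_compose[OF X y])
    then show ?thesis unfolding borel_prod .
  qed
  have "(\<lambda>\<omega> i. hist st y (fst (fst \<omega>)) (snd \<omega>) (Suc t) i) \<in> ?\<Omega> \<rightarrow>\<^sub>M PiM {..<Suc t} (\<lambda>_. borel)"
  proof (rule measurable_PiM_single')
    fix i assume i: "i \<in> {..<Suc t}"
    show "(\<lambda>\<omega>. hist st y (fst (fst \<omega>)) (snd \<omega>) (Suc t) i) \<in> ?\<Omega> \<rightarrow>\<^sub>M borel"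
    proof (cases "i = t")
      case True
      show ?thesis unfolding True hist_Suc_same by (rule XY)
    next
      case False
      then have "i \<in> {..<t}" using i by auto
      then have "(\<lambda>\<omega>. ?H \<omega> i) \<in> ?\<Omega> \<rightarrow>\<^sub>M borel"
        using measurable_compose[OF IH measurable_component_singleton] by blast
      then show ?thesis unfolding hist_Suc_other[OF False] .
    qed
  next
    show "(\<lambda>\<omega> i. hist st y (fst (fst \<omega>)) (snd \<omega>) (Suc t) i) \<in> space ?\<Omega> \<rightarrow> (\<Pi>\<^sub>E i\<in>{..<Suc t}. space borel)"
    proof (intro funcsetI PiE_I)
      fix \<omega> i assume "i \<notin> {..<Suc t}"
      then show "hist st y (fst (fst \<omega>)) (snd \<omega>) (Suc t) i = undefined" by (intro hist_ext) simp
    qed simp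
  qed
  then show ?case by simp
qed


definition TT :: "nat \<Rightarrow> (nat \<Rightarrow> 'd::finite \<Rightarrow> nat) set" where
  "TT A = PiE {1..A} (\<lambda>_. PiE UNIV (\<lambda>_. {0..2::nat}))"

lemma TT_ok: "w \<in> TT A \<Longrightarrow> okw w A"
  unfolding TT_def by (auto simp: PiE_iff)

lemma TT_finite: "finite (TT A)"
  unfolding TT_def by (intro finite_PiE) auto

lemma TT_card: "card (TT A :: (nat \<Rightarrow> 'd::finite \<Rightarrow> nat) set) = 3 ^ (CARD('d) * A)"
proof -
  have "card (PiE (UNIV::'d set) (\<lambda>_. {0..2::nat})) = 3 ^ CARD('d)"
    by (simp add: card_PiE)
  then show ?thesis unfolding TT_def by (simp add: card_PiE power_mult)
qed

lemma Qc_nest: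
  assumes ok: "okw w A" and x: "x \<in> Qc w a" and b: "1 \<le> b" "b \<le> a" "a \<le> A"
  shows "x \<in> Qc w b"
proof -
  have "\<bar>(x - cen w b) $ i\<bar> < gamma b" for i
  proof -
    have xa: "\<bar>x $ i - cen w a $ i\<bar> < gamma a" using x by (simp add: Qc_def infnorm_less_iff)
    have d: "\<bar>cen w a $ i - cen w b $ i\<bar> \<le> 5/2 * gamma (Suc b) - 5/2 * gamma (Suc a)"
      using cen_dist[of b a w i] b ok by auto
    have "gamma a + (5/2 * gamma (Suc b) - 5/2 * gamma (Suc a)) \<le> gamma b"
    proof (cases "a = b")
      case True then show ?thesis by simp
    next
      case False
      then have "Suc b \<le> a" using b by simp
      then have "gamma a \<le> gamma (Suc b)" by (rule gamma_mono)
      then show ?thesis using gamma_pos[of "Suc a"] gamma_pos[of "Suc b"] gamma_Suc[of b] by linarith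
    qed
    then show ?thesis using xa d by simp
  qed
  then show ?thesis by (simp add: Qc_def infnorm_less_iff)
qed

lemma Qc_disj:
  assumes b: "b \<in> {1..A}" and agree: "\<forall>c\<in>{1..<b}. w c = w' c" and ne: "w b \<noteq> w' b"
    and x: "x \<in> Qc w b" "x \<in> Qc w' b"
  shows False
proof -
  obtain i where i: "w b i \<noteq> w' b i" using ne by auto
  obtain m where m: "b = Suc m" using b by (cases b) auto
  have k: "kap w m = kap w' m" by (rule kap_cong) (use agree m in auto)
  have "cen w b $ i - cen w' b $ i = 2 * gamma b * (real (w b i) - real (w' b i))"
    unfolding m cen_Suc k by (simp add: algebra_simps)
  moreover have "\<bar>real (w b i) - real (w' b i)\<bar> \<ge> 1" using i by linarith
  ultimately have "\<bar>cen w b $ i - cen w' b $ i\<bar> \<ge> 2 * gamma b"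
    using gamma_pos[of b] by (simp add: abs_mult mult_le_cancel_left1)
  moreover have "\<bar>x $ i - cen w b $ i\<bar> < gamma b" "\<bar>x $ i - cen w' b $ i\<bar> < gamma b"
    using x by (auto simp add: Qc_def infnorm_less_iff)
  ultimately show False by linarith
qed

lemma succ_count:
  fixes st :: "nat \<Rightarrow> (nat \<Rightarrow> (real^'d::finite) \<times> real) \<Rightarrow> 'u \<Rightarrow> real^'d"
    and ot :: "(nat \<Rightarrow> (real^'d) \<times> real) \<Rightarrow> real^'d"
  assumes A: "A \<ge> 1" and al: "\<alpha> > 0"
    and otq: "\<And>h. ot h \<in> (\<lambda>i. fst (h i)) ` {..<n}"
  shows "card {w \<in> (TT A :: (nat \<Rightarrow> 'd \<Rightarrow> nat) set). ot (hist st (yC Mh \<alpha> A (kap w A)) us es n) \<in> Qc w A}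
      \<le> (n + A - 1) choose A"
proof -
  let ?Y = "\<lambda>w. yC Mh \<alpha> A (kap w A)"
  have "card {w \<in> (TT A :: (nat \<Rightarrow> 'd \<Rightarrow> nat) set). \<exists>t<n. st t (hist st (?Y w) us es t) (us t) \<in> Qc w A}
      \<le> (n + A - 1) choose A"
  proof (rule tree_count[OF A])
    show "x \<in> Qc w b" if "w \<in> TT A" "x \<in> Qc w a" "1 \<le> b" "b \<le> a" "a \<le> A" for w x a b
      using Qc_nest[OF TT_ok] that by blast
    show False if "w \<in> TT A" "w' \<in> TT A" "b \<in> {1..A}" "\<forall>c\<in>{1..<b}. w c = w' c" "w b \<noteq> w' b"
      "x \<in> Qc w b" "x \<in> Qc w' b" for w w' b x
      using Qc_disj that by blast
    show "?Y w x = ?Y w' x" if "w \<in> TT A" "w' \<in> TT A"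
      "\<forall>a\<in>{1..A}. (\<forall>c\<in>{1..a}. w c = w' c) \<or> (x \<notin> Qc w a \<and> x \<notin> Qc w' a)" for w w' x
      by (rule yC_cong[OF TT_ok TT_ok A al]) (use that in auto)
    show "w = w'" if "w \<in> TT A" "w' \<in> TT A" "\<forall>c\<in>{1..A}. w c = w' c" for w w'
      using that unfolding TT_def by (intro PiE_ext) auto
  qed
  moreover have "{w \<in> (TT A :: (nat \<Rightarrow> 'd \<Rightarrow> nat) set). ot (hist st (?Y w) us es n) \<in> Qc w A}
     \<subseteq> {w \<in> TT A. \<exists>t<n. st t (hist st (?Y w) us es t) (us t) \<in> Qc w A}"
  proof safe
    fix w :: "nat \<Rightarrow> 'd \<Rightarrow> nat" assume "w \<in> TT A" "ot (hist st (?Y w) us es n) \<in> Qc w A"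
    moreover obtain i where "i < n" "ot (hist st (?Y w) us es n) = fst (hist st (?Y w) us es n i)"
      using otq[of "hist st (?Y w) us es n"] by auto
    ultimately show "\<exists>t<n. st t (hist st (?Y w) us es t) (us t) \<in> Qc w A"
      using hist_at[of i n st] by auto
  qed
  then have "card {w \<in> (TT A :: (nat \<Rightarrow> 'd \<Rightarrow> nat) set). ot (hist st (?Y w) us es n) \<in> Qc w A}
     \<le> card {w \<in> TT A. \<exists>t<n. st t (hist st (?Y w) us es t) (us t) \<in> Qc w A}"
    by (intro card_mono) (auto intro: finite_subset[OF _ TT_finite])
  ultimately show ?thesis by linarith
qed


lemma choose_fact_le: "real (m choose k) * fact k \<le> real m ^ k"
proof (cases "k \<le> m")
  case True
  have "fact k * fact (m - k) * (m choose k) = (fact m :: nat)" by (rule binomial_fact_lemma[OF True])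
  then have "(m choose k) * fact k = fact m div fact (m - k)"
    by (metis fact_nonzero mult.commute nonzero_mult_div_cancel_left mult.assoc)
  also have "\<dots> \<le> m ^ k" by (rule fact_div_fact_le_pow[OF True])
  finally have "(m choose k) * fact k \<le> m ^ k" .
  then have "real ((m choose k) * fact k) \<le> real (m ^ k)" by (rule of_nat_mono)
  then show ?thesis by simp
next
  case False then show ?thesis by (simp add: binomial_eq_0)
qed

lemma pow_fact_le_exp: "(x::real) \<ge> 0 \<Longrightarrow> x ^ k / fact k \<le> exp x"
proof -
  assume x: "x \<ge> 0"
  have s: "summable (\<lambda>n. x ^ n /\<^sub>R fact n)" using exp_converges sums_summable by blast
  have "sum (\<lambda>n. x ^ n /\<^sub>R fact n) {k} \<le> suminf (\<lambda>n. x ^ n /\<^sub>R fact n)"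
    by (rule sum_le_suminf[OF s]) (use x in auto)
  also have "\<dots> = exp x" using exp_converges sums_unique by metis
  finally show ?thesis by (simp add: divide_inverse mult.commute)
qed

lemma kk_le: "real k ^ k \<le> 3 ^ k * fact k"
proof -
  have "real k ^ k / fact k \<le> exp (real k)" by (rule pow_fact_le_exp) simp
  also have "\<dots> = exp 1 ^ k" using exp_of_nat_mult[of k 1] by simp
  also have "\<dots> \<le> 3 ^ k" by (rule power_mono[OF exp_le]) simp
  finally show ?thesis by (simp add: divide_le_eq)
qed

lemma Delta_ge1: "d \<ge> 1 \<Longrightarrow> Delta d \<ge> 1"
proof -
  assume "d \<ge> 1"
  then have "(3::nat) ^ d \<ge> 3 ^ 1" by (intro power_increasing) auto
  then show ?thesis unfolding Delta_def by simp
qed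

lemma Delta_le: "2 * real (Delta d) \<le> 3 ^ d"
proof -
  have "2 * (3 ^ d div 2) \<le> (3::nat) ^ d" by simp
  then have "real (2 * (3 ^ d div 2)) \<le> real ((3::nat) ^ d)" by (rule of_nat_mono)
  then show ?thesis unfolding Delta_def by (metis of_nat_mult of_nat_numeral of_nat_power)
qed

lemma abar_props:
  assumes d: "d \<ge> 1"
  shows "abar d n \<ge> 3" "4 * real n \<le> real (Delta d) * real (abar d n)"
    "real (abar d n) \<le> 4 * real n + 7"
proof -
  have D: "real (Delta d) \<ge> 1" using Delta_ge1[OF d] by simp
  let ?q = "4 * (real n + 1) / real (Delta d)"
  have q0: "?q > 0" using D by simp
  have c: "real (nat \<lceil>?q\<rceil>) = real_of_int \<lceil>?q\<rceil>" using q0 by simp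
  have c1: "real_of_int \<lceil>?q\<rceil> \<ge> ?q" by (rule le_of_int_ceiling)
  have c2: "real_of_int \<lceil>?q\<rceil> \<le> ?q + 1" by (rule of_int_ceiling_le_add_one)
  have ab: "real (abar d n) = real_of_int \<lceil>?q\<rceil> + 2" unfolding abar_def using c by simp
  have "real_of_int \<lceil>?q\<rceil> > 0" using c1 q0 by linarith
  then have "real (abar d n) > 2" using ab by linarith
  then show "abar d n \<ge> 3" by simp
  have "?q * real (Delta d) = 4 * (real n + 1)" using D by simp
  then have "4 * real n \<le> real (Delta d) * ?q" by (simp add: mult.commute)
  also have "\<dots> \<le> real (Delta d) * real (abar d n)"
  proof (rule mult_left_mono)
    show "?q \<le> real (abar d n)" using c1 ab by linarith
  qed simp
  finally show "4 * real n \<le> real (Delta d) * real (abar d n)" .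
  have "?q \<le> 4 * (real n + 1)" using D by (simp add: divide_le_eq)
  moreover have "real (abar d n) \<le> ?q + 3" using ab c2 by linarith
  ultimately have "real (abar d n) \<le> 4 * (real n + 1) + 3" by linarith
  then show "real (abar d n) \<le> 4 * real n + 7" by simp
qed


lemma choose_bound:
  assumes d: "d \<ge> 1"
  shows "2 * real ((n + abar d n - 1) choose (abar d n)) \<le> 3 ^ (d * abar d n)"
proof -
  define A where "A = abar d n"
  have A3: "A \<ge> 3" and nA: "4 * real n \<le> real (Delta d) * real A"
    using abar_props[OF d, of n] by (auto simp: A_def)
  have "2 * real ((n + A - 1) choose A) \<le> 3 ^ (d * A)"
  proof (cases "d = 1")
    case True
    have "Delta d = 1" using True by (simp add: Delta_def)
    then have "4 * n \<le> A" using nA by simp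
    have "((2::nat) ^ (n + A)) ^ 4 = 2 ^ (4 * n + 4 * A)" by (simp add: power_mult[symmetric] algebra_simps)
    also have "\<dots> \<le> 2 ^ (5 * A)" using \<open>4 * n \<le> A\<close> by (intro power_increasing) auto
    also have "\<dots> = 32 ^ A" by (simp add: power_mult)
    also have "\<dots> \<le> 81 ^ A" by (intro power_mono) auto
    also have "\<dots> = ((3::nat) ^ 4) ^ A" by simp
    also have "\<dots> = (3 ^ A) ^ 4" by (metis power_mult mult.commute)
    finally have "(2::nat) ^ (n + A) \<le> 3 ^ A" using power_mono_iff[of "(2::nat) ^ (n + A)" "3 ^ A" 4] by linarith
    moreover have "2 * ((n + A - 1) choose A) \<le> 2 * 2 ^ (n + A - 1)"
      using binomial_le_pow2 by simp
    moreover have "2 * (2::nat) ^ (n + A - 1) = 2 ^ (n + A)" using A3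
      by (metis One_nat_def Suc_diff_1 add_gr_0 less_le_trans numeral_3_eq_3 power_Suc zero_less_Suc)
    ultimately have "2 * ((n + A - 1) choose A) \<le> 3 ^ A" by simp
    then have "real (2 * ((n + A - 1) choose A)) \<le> real ((3::nat) ^ A)" by (rule of_nat_mono)
    then show ?thesis using True by simp
  next
    case False
    then have d2: "d \<ge> 2" using d by simp
    define D :: real where "D = 3 ^ d"
    have D9: "D \<ge> 9" unfolding D_def using power_increasing[OF d2, of "3::real"] by simp
    have DD: "real (Delta d) \<le> D / 2" using Delta_le[of d] by (simp add: D_def)
    define m where "m = n + A - 1"
    have Ar: "real A \<ge> 3" using A3 by simp
    have mA: "real m \<le> real A * (1 + D / 8)"
    proof -
      have "real m \<le> real n + real A" unfolding m_def by linarith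
      moreover have "4 * real n \<le> D / 2 * real A"
        using nA DD Ar by (meson mult_right_mono of_nat_0_le_iff order.trans)
      ultimately show ?thesis by (simp add: algebra_simps)
    qed
    have c1: "real (m choose A) * fact A \<le> real m ^ A" by (rule choose_fact_le)
    have c2: "real A ^ A \<le> 3 ^ A * fact A" by (rule kk_le)
    have fpos: "(fact A :: real) > 0" by simp
    have "real (m choose A) * real A ^ A \<le> real (m choose A) * (3 ^ A * fact A)"
      using c2 by (intro mult_left_mono) auto
    also have "\<dots> = 3 ^ A * (real (m choose A) * fact A)" by simp
    also have "\<dots> \<le> 3 ^ A * real m ^ A" using c1 by (intro mult_left_mono) auto
    finally have c3: "real (m choose A) * real A ^ A \<le> (3 * real m) ^ A" by (simp add: power_mult_distrib)
    have "3 * real m \<le> real A * (17 / 24 * D)"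
    proof -
      have "3 * real m \<le> real A * (3 + 3 * D / 8)" using mA by (simp add: algebra_simps)
      also have "\<dots> \<le> real A * (17 / 24 * D)" using D9 Ar by (intro mult_left_mono) auto
      finally show ?thesis .
    qed
    then have "(3 * real m) ^ A \<le> (real A * (17 / 24 * D)) ^ A" by (intro power_mono) auto
    moreover have "(real A * (17 / 24 * D)) ^ A = real A ^ A * ((17 / 24) ^ A * D ^ A)"
      by (simp only: power_mult_distrib)
    ultimately have "real (m choose A) * real A ^ A \<le> real A ^ A * ((17 / 24) ^ A * D ^ A)"
      using c3 by linarith
    then have c4: "real (m choose A) \<le> (17 / 24) ^ A * D ^ A"
      using Ar by (simp add: mult.commute)
    have "(17 / 24 :: real) ^ A \<le> (17 / 24) ^ 3" using A3 by (intro power_decreasing) auto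
    then have "(17 / 24 :: real) ^ A * D ^ A \<le> (17 / 24) ^ 3 * D ^ A" by (intro mult_right_mono) (use D9 in auto)
    then have "2 * real (m choose A) \<le> 2 * (17 / 24) ^ 3 * D ^ A" using c4 by simp
    also have "\<dots> \<le> 1 * D ^ A"
    proof (rule mult_right_mono)
      show "2 * (17 / 24 :: real) ^ 3 \<le> 1" by (simp add: eval_nat_numeral)
    qed (use D9 in simp)
    also have "\<dots> = D ^ A" by simp
    finally show ?thesis unfolding m_def D_def by (simp add: power_mult)
  qed
  then show ?thesis unfolding A_def .
qed


lemma noise_props: "s2 \<ge> 0 \<Longrightarrow> prob_space (noise s2) \<and> sets (noise s2) = sets borel"
  unfolding noise_def by (auto intro: prob_space_return prob_space_normal_density)

lemma idx_finite: "finite (idx a :: ('d::finite \<Rightarrow> nat) set)"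
proof -
  have "idx a = PiE (UNIV::'d set) (\<lambda>_. {1..5^a})" by (auto simp: idx_def PiE_UNIV_domain)
  then show ?thesis by (simp add: finite_PiE)
qed

lemma Uidx_finite: "finite (Uidx a :: ('d::finite \<Rightarrow> nat) set)"
proof (cases a)
  case 0 then show ?thesis by simp
next
  case (Suc b)
  have "Uidx a \<subseteq> (idx a :: ('d \<Rightarrow> nat) set)" using Suc by auto
  then show ?thesis using idx_finite finite_subset by blast
qed

lemma final_ineq:
  assumes al: "\<alpha> > 0" and A: "real A \<le> 4 * real n + 7"
  shows "exp (- \<alpha> * (ln 2 + 7 * ln 5)) * exp (- (4 * \<alpha> * ln 5) * real n) \<le> gamma A powr \<alpha>"
proof -
  have g: "gamma A > 0" by (rule gamma_pos)
  have lg: "ln (gamma A) = - ln 2 - real A * ln 5"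
    unfolding gamma_def by (simp add: ln_div ln_mult ln_realpow)
  have l5: "ln (5::real) > 0" by simp
  have "real A * (\<alpha> * ln 5) \<le> (4 * real n + 7) * (\<alpha> * ln 5)"
    using A al l5 by (intro mult_right_mono) auto
  then have "- \<alpha> * (ln 2 + 7 * ln 5) + - (4 * \<alpha> * ln 5) * real n \<le> \<alpha> * ln (gamma A)"
    unfolding lg by (simp add: algebra_simps)
  then have e1: "exp (- \<alpha> * (ln 2 + 7 * ln 5) + - (4 * \<alpha> * ln 5) * real n) \<le> exp (\<alpha> * ln (gamma A))"
    by (simp only: exp_le_cancel_iff)
  have e2: "exp (- \<alpha> * (ln 2 + 7 * ln 5) + - (4 * \<alpha> * ln 5) * real n) =
     exp (- \<alpha> * (ln 2 + 7 * ln 5)) * exp (- (4 * \<alpha> * ln 5) * real n)" by (rule exp_add)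
  have e3: "gamma A powr \<alpha> = exp (\<alpha> * ln (gamma A))" using g by (simp add: powr_def mult.commute)
  show ?thesis unfolding e3 e2[symmetric] by (rule e1)
qed


theorem proposition3:
  fixes \<alpha> M Mt :: real
    and step :: "nat \<Rightarrow> nat \<Rightarrow> (nat \<Rightarrow> (real^'d::finite) \<times> real) \<Rightarrow> (nat \<Rightarrow> real) \<Rightarrow> real^'d"
    and out :: "nat \<Rightarrow> (nat \<Rightarrow> (real^'d) \<times> real) \<Rightarrow> (nat \<Rightarrow> real) \<Rightarrow> real^'d"
    and Um :: "nat \<Rightarrow> nat \<Rightarrow> (nat \<Rightarrow> real) measure"
    and Us :: "nat \<Rightarrow> (nat \<Rightarrow> real) measure"
  assumes "\<alpha> > 0" and "M > 0" and "Mt > 0"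
    and "M / Mt \<ge> (1 / (1 - 5 powr (-\<alpha>))) * (1 + 1 / (5 powr \<alpha> - 3 powr \<alpha>)) * 80 powr \<alpha>"
    and "admissible step out Um Us"
  shows "\<exists>b4 > 0. \<exists>b5 > 0. \<forall>s2 \<ge> 0. \<exists>b3. \<forall>n \<ge> b3.
           (SUP \<kappa> \<in> Uidx (abar CARD('d) n).
              exp_regret step out Um Us s2 n (yC (Mhat \<alpha> Mt) \<alpha> (abar CARD('d) n) \<kappa>))
           \<ge> b4 * exp (- b5 * real n)"
proof -
  note al = assms(1)
  define Mh where "Mh = Mhat \<alpha> Mt"
  have Mh: "Mh > 0" unfolding Mh_def Mhat_def using powr53[OF al] assms(3) by simp
  define b4 where "b4 = Mh / 2 * exp (- \<alpha> * (ln 2 + 7 * ln 5))"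
  define b5 where "b5 = 4 * \<alpha> * ln 5"
  have b4: "b4 > 0" unfolding b4_def using Mh by simp
  have b5: "b5 > 0" unfolding b5_def using al by simp
  have main: "exp_regret step out Um Us s2 n (yC Mh \<alpha> (abar CARD('d) n) \<kappa>) \<le> (SUP \<kappa> \<in> Uidx (abar CARD('d) n).
              exp_regret step out Um Us s2 n (yC Mh \<alpha> (abar CARD('d) n) \<kappa>))"
    if "\<kappa> \<in> Uidx (abar CARD('d) n)" for s2 n \<kappa>
    by (rule cSUP_upper[OF that bdd_above_finite]) (simp add: Uidx_finite)
  have "(SUP \<kappa> \<in> Uidx (abar CARD('d) n).
              exp_regret step out Um Us s2 n (yC Mh \<alpha> (abar CARD('d) n) \<kappa>))
           \<ge> b4 * exp (- b5 * real n)" if s2: "s2 \<ge> 0" and n: "n \<ge> 1" for s2 n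
  proof -
    define d where "d = CARD('d)"
    have d1: "d \<ge> 1" unfolding d_def by simp
    define A where "A = abar d n"
    have A3: "A \<ge> 3" and Ale: "real A \<le> 4 * real n + 7" using abar_props[OF d1, of n] by (auto simp: A_def)
    have A1: "A \<ge> 1" using A3 by simp
    let ?\<Omega> = "(PiM {..<n} (Um n) \<Otimes>\<^sub>M Us n) \<Otimes>\<^sub>M PiM {..<n} (\<lambda>_. noise s2)"
    have adm: "(\<forall>t<n. prob_space (Um n t) \<and> sets (Um n t) = sets borel)
    \<and> prob_space (Us n) \<and> sets (Us n) = sets borel
    \<and> (\<forall>t<n. (\<lambda>(h, u). step n t h u) \<in> (PiM {..<t} (\<lambda>_. borel) \<Otimes>\<^sub>M borel) \<rightarrow>\<^sub>M borel)
    \<and> (\<lambda>(h, u). out n h u) \<in> (PiM {..<n} (\<lambda>_. borel) \<Otimes>\<^sub>M borel) \<rightarrow>\<^sub>M borel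
    \<and> (\<forall>h u. out n h u \<in> (\<lambda>i. fst (h i)) ` {..<n})"
      using assms(5) n unfolding admissible_def by blast
    have P: "prob_space ?\<Omega>"
      using adm noise_props[OF s2] by (intro prob_space_pair prob_space_PiM) auto
    interpret P: prob_space ?\<Omega> by (rule P)
    define Y where "Y w = yC Mh \<alpha> A (kap w A)" for w :: "nat \<Rightarrow> 'd \<Rightarrow> nat"
    define f where "f w \<omega> = opt (Y w) - Y w (out n (hist (step n) (Y w) (fst (fst \<omega>)) (snd \<omega>) n) (snd (fst \<omega>)))"
      for w \<omega>
    define c0 where "c0 = Mh * gamma A powr \<alpha>"
    define B where "B = PL Mh \<alpha> A + Mh * gamma A powr \<alpha>"
    have fb: "0 \<le> f w \<omega> \<and> f w \<omega> \<le> B" if "w \<in> TT A" for w \<omega>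
      using regret_bounds(1,2)[OF TT_ok[OF that] A1 al Mh] unfolding f_def Y_def B_def by auto
    have fc: "c0 \<le> f w \<omega>" if "w \<in> TT A" "out n (hist (step n) (Y w) (fst (fst \<omega>)) (snd \<omega>) n) (snd (fst \<omega>)) \<notin> Qc w A" for w \<omega>
      using regret_bounds(3)[OF TT_ok[OF that(1)] A1 al Mh that(2)[unfolded Y_def]] unfolding f_def Y_def c0_def by auto
    have fm: "f w \<in> borel_measurable ?\<Omega>" for w
    proof -
      have H: "(\<lambda>\<omega>. hist (step n) (Y w) (fst (fst \<omega>)) (snd \<omega>) n) \<in> ?\<Omega> \<rightarrow>\<^sub>M PiM {..<n} (\<lambda>_. borel)"
        by (rule hist_meas) (use adm noise_props[OF s2] in \<open>auto simp: Y_def\<close>)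
      have U: "(\<lambda>\<omega>. snd (fst \<omega>)) \<in> ?\<Omega> \<rightarrow>\<^sub>M borel"
      proof -
        have "(\<lambda>\<omega>. snd (fst \<omega>)) \<in> ?\<Omega> \<rightarrow>\<^sub>M Us n" by measurable
        then show ?thesis using measurable_cong_sets[OF refl] adm by blast
      qed
      have O: "(\<lambda>\<omega>. out n (hist (step n) (Y w) (fst (fst \<omega>)) (snd \<omega>) n) (snd (fst \<omega>))) \<in> borel_measurable ?\<Omega>"
      proof -
        have outm: "(\<lambda>(h, u). out n h u) \<in> (PiM {..<n} (\<lambda>_. borel) \<Otimes>\<^sub>M borel) \<rightarrow>\<^sub>M borel"
          using adm by blast
        show ?thesis using measurable_compose[OF measurable_Pair[OF H U] outm] by simp
      qed
      have "(\<lambda>\<omega>. Y w (out n (hist (step n) (Y w) (fst (fst \<omega>)) (snd \<omega>) n) (snd (fst \<omega>)))) \<in> borel_measurable ?\<Omega>"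
        using measurable_compose[OF O yC_meas] unfolding Y_def by simp
      then show ?thesis unfolding f_def by measurable
    qed
    have fi: "integrable ?\<Omega> (f w)" if "w \<in> TT A" for w
      by (rule P.integrable_const_bound[where B=B]) (use fb[OF that] fm in auto)
    have er: "exp_regret step out Um Us s2 n (yC Mh \<alpha> A (kap w A)) = integral\<^sup>L ?\<Omega> (f w)" for w
      unfolding exp_regret_def f_def Y_def ..
    have fin: "finite (TT A :: (nat \<Rightarrow> 'd \<Rightarrow> nat) set)" by (rule TT_finite)
    have cardT: "card (TT A :: (nat \<Rightarrow> 'd \<Rightarrow> nat) set) = 3 ^ (d * A)" unfolding d_def by (rule TT_card)
    have pw: "c0 * real (card (TT A :: (nat \<Rightarrow> 'd \<Rightarrow> nat) set)) / 2 \<le> (\<Sum>w\<in>TT A. f w \<omega>)" for \<omega>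
    proof -
      define P where "P w \<longleftrightarrow> out n (hist (step n) (Y w) (fst (fst \<omega>)) (snd \<omega>) n) (snd (fst \<omega>)) \<in> Qc w A"
        for w :: "nat \<Rightarrow> 'd \<Rightarrow> nat"
      have cs: "card {w \<in> TT A. P w} \<le> (n + A - 1) choose A"
        unfolding P_def Y_def
        by (rule succ_count[OF A1 al, where ot="\<lambda>h. out n h (snd (fst \<omega>))"]) (use adm in blast)
      have "2 * real ((n + A - 1) choose A) \<le> 3 ^ (d * A)"
        using choose_bound[OF d1, of n] unfolding A_def by simp
      moreover have r1: "real (card {w \<in> TT A. P w}) \<le> real ((n + A - 1) choose A)" using cs by (rule of_nat_mono)
      moreover have r2: "real (card (TT A :: (nat \<Rightarrow> 'd \<Rightarrow> nat) set)) = 3 ^ (d * A)" using cardT by simp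
      ultimately have cs2: "2 * real (card {w \<in> TT A. P w}) \<le> real (card (TT A :: (nat \<Rightarrow> 'd \<Rightarrow> nat) set))"
        by linarith
      have split: "{w \<in> TT A. \<not> P w} = TT A - {w \<in> TT A. P w}" by auto
      have fP: "finite {w \<in> TT A. P w}" using fin by auto
      have sub: "{w \<in> TT A. P w} \<subseteq> TT A" by auto
      have cn0: "card {w \<in> TT A. \<not> P w} = card (TT A :: (nat \<Rightarrow> 'd \<Rightarrow> nat) set) - card {w \<in> TT A. P w}"
        unfolding split by (rule card_Diff_subset[OF fP sub])
      have cle: "card {w \<in> TT A. P w} \<le> card (TT A :: (nat \<Rightarrow> 'd \<Rightarrow> nat) set)" by (rule card_mono[OF fin sub])
      have cn: "real (card {w \<in> TT A. \<not> P w}) = real (card (TT A :: (nat \<Rightarrow> 'd \<Rightarrow> nat) set)) - real (card {w \<in> TT A. P w})"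
        using cn0 cle by (simp add: of_nat_diff)
      have "(\<Sum>w\<in>TT A. (if \<not> P w then c0 else 0)) = (\<Sum>w\<in>{w \<in> TT A. \<not> P w}. c0)"
        by (rule sum.inter_filter[symmetric]) (rule fin)
      also have "\<dots> = c0 * real (card {w \<in> TT A. \<not> P w})" by simp
      finally have s1: "(\<Sum>w\<in>TT A. (if \<not> P w then c0 else 0)) = c0 * real (card {w \<in> TT A. \<not> P w})" .
      have "(\<Sum>w\<in>TT A. (if \<not> P w then c0 else 0)) \<le> (\<Sum>w\<in>TT A. f w \<omega>)"
        by (rule sum_mono) (use fb fc in \<open>auto simp: P_def\<close>)
      moreover have "c0 \<ge> 0" unfolding c0_def using Mh by simp
      ultimately have s2': "c0 * real (card {w \<in> TT A. \<not> P w}) \<le> (\<Sum>w\<in>TT A. f w \<omega>)" "c0 \<ge> 0" using s1 by auto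
      define X where "X = real (card (TT A :: (nat \<Rightarrow> 'd \<Rightarrow> nat) set))"
      define Z where "Z = real (card {w \<in> TT A. P w})"
      have "0 \<le> c0 * (X / 2 - Z)" using s2'(2) cs2 by (intro mult_nonneg_nonneg) (auto simp: X_def Z_def)
      moreover have "c0 * real (card {w \<in> TT A. \<not> P w}) = c0 * X / 2 + c0 * (X / 2 - Z)"
        unfolding cn X_def[symmetric] Z_def[symmetric] by (simp add: algebra_simps)
      ultimately show ?thesis using s2'(1) unfolding X_def by linarith
    qed
    have "c0 * real (card (TT A :: (nat \<Rightarrow> 'd \<Rightarrow> nat) set)) / 2 \<le> integral\<^sup>L ?\<Omega> (\<lambda>\<omega>. \<Sum>w\<in>TT A. f w \<omega>)"
      by (rule P.integral_ge_const) (use fi pw in auto)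
    also have "\<dots> = (\<Sum>w\<in>TT A. integral\<^sup>L ?\<Omega> (f w))" using Bochner_Integration.integral_sum[where I="TT A" and M="?\<Omega>" and f=f] fi by simp
    finally have tot: "c0 * real (card (TT A :: (nat \<Rightarrow> 'd \<Rightarrow> nat) set)) / 2 \<le> (\<Sum>w\<in>TT A. integral\<^sup>L ?\<Omega> (f w))" .
    have "\<exists>w\<in>TT A. c0 / 2 \<le> integral\<^sup>L ?\<Omega> (f w)"
    proof (rule ccontr)
      assume "\<not> ?thesis"
      then have lt: "\<And>w. w \<in> TT A \<Longrightarrow> integral\<^sup>L ?\<Omega> (f w) < c0 / 2" by auto
      have ne: "TT A \<noteq> ({} :: (nat \<Rightarrow> 'd \<Rightarrow> nat) set)" using cardT by (metis card.empty zero_less_numeral zero_less_power less_irrefl)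
      have "(\<Sum>w\<in>TT A. integral\<^sup>L ?\<Omega> (f w)) < (\<Sum>w\<in>(TT A :: (nat \<Rightarrow> 'd \<Rightarrow> nat) set). c0 / 2)"
        by (rule sum_strict_mono[OF fin ne lt])
      then show False using tot by (simp add: mult.commute)
    qed
    then obtain w where w: "w \<in> TT A" and wl: "c0 / 2 \<le> integral\<^sup>L ?\<Omega> (f w)" by blast
    have kU: "kap w A \<in> Uidx A" by (rule kap_Uidx[OF TT_ok[OF w]])
    have "b4 * exp (- b5 * real n) = Mh / 2 * (exp (- \<alpha> * (ln 2 + 7 * ln 5)) * exp (- (4 * \<alpha> * ln 5) * real n))"
      unfolding b4_def b5_def by (simp add: mult.assoc)
    also have "\<dots> \<le> Mh / 2 * gamma A powr \<alpha>"
      using final_ineq[OF al Ale] Mh by (intro mult_left_mono) auto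
    also have "\<dots> = c0 / 2" unfolding c0_def by simp
    also have "\<dots> \<le> exp_regret step out Um Us s2 n (yC Mh \<alpha> A (kap w A))" using wl er by simp
    also have "\<dots> \<le> (SUP \<kappa> \<in> Uidx A. exp_regret step out Um Us s2 n (yC Mh \<alpha> A \<kappa>))"
      using main[of "kap w A" n s2] kU unfolding A_def d_def by simp
    finally show ?thesis unfolding A_def d_def .
  qed
  then show ?thesis using b4 b5 unfolding Mh_def by blast
qed


end
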